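(* Let $n\ge2$, $l\ge1$, $\mathfrak g=A^{(2)}_{2n}$, $B$ the level-$l$ perfect crystal of the context, $\lambda=l\Lambda_0$, $d=2n$, and $i^{(j)}_a=a-1$ for $1\le a\le n+1$, $i^{(j)}_a=2n+1-a$ for $n+2\le a\le 2n$ (all $j\ge1$). Then: (II) $B^{(j)}_d=B$ for all $j\ge1$; (III) $\langle\lambda_j,h_{i^{(j)}_a}\rangle\le\varepsilon_{i^{(j)}_a}(b)$ for all $j\ge1$, $1\le a\le d$, $b\in B^{(j)}_{a-1}$; (IV') for all $j\ge1$, $a=1,\dots,d$: $\varepsilon_{i^{(j)}_{a+1}}(b^{(j)}_a)=0$, $\varphi_{i^{(j)}_{a+1}}(b^{(j)}_a)>0$ (with $i^{(j)}_{d+1}:=i^{(j+1)}_1$), and $b^{(j+1)}_0=\tilde f_{i^{(j+1)}_1}^mb^{(j)}_d$ with $m=\langle\lambda_{j+1},h_{i^{(j+1)}_1}\rangle$. Moreover $B^{(j)}_0=\{(0,\dots,0)\}$, $B^{(j)}_{2n}=B$; for $1\le a\le n$, $B^{(j)}_a$ is the set of $b\in B$ with all coordinates $0$ except possibly $x_1,\dots,x_a$; for $1\le a\le n-1$, $B^{(j)}_{n+a}$ is the set of $b\in B$ with all coordinates $0$ except possibly $x_1,\dots,x_n,\bar x_n,\dots,\bar x_{n-a+1}$. Also $b^{(j)}_0=(0,\dots,0)$, and for $1\le a\le n$, $b^{(j)}_a$ has $x_a=l$ and $b^{(j)}_{n+a}$ has $\bar x_{n-a+1}=l$, all other coordinates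 $0$.
   Context: $(x)_+=\max(x,0)$. $B=\{(x_1,\dots,x_n,\bar x_n,\dots,\bar x_1)\in\mathbb Z^{2n}: x_i,\bar x_i\ge0,\ \sum_{i=1}^n(x_i+\bar x_i)\le l\}$. Crystal structure: $\tilde f_0b=(x_1+1,x_2,\dots,\bar x_1)$ if $x_1\ge\bar x_1$, $(x_1,\dots,\bar x_2,\bar x_1-1)$ if $x_1<\bar x_1$; for $1\le i\le n-1$, $\tilde f_ib$ replaces $(x_i,x_{i+1})$ by $(x_i-1,x_{i+1}+1)$ if $x_{i+1}\ge\bar x_{i+1}$, and $(\bar x_{i+1},\bar x_i)$ by $(\bar x_{i+1}-1,\bar x_i+1)$ if $x_{i+1}<\bar x_{i+1}$; $\tilde f_nb$ replaces $(x_n,\bar x_n)$ by $(x_n-1,\bar x_n+1)$; $\tilde e_ib=b'$ iff $\tilde f_ib'=b$; results outside $B$ mean $0$. With $s(b)=\sum_{i=1}^n(x_i+\bar x_i)$: $\varphi_0(b)=l-s(b)+2(\bar x_1-x_1)_+$, $\varepsilon_0(b)=l-s(b)+2(x_1-\bar x_1)_+$; $\varphi_i(b)=x_i+(\bar x_{i+1}-x_{i+1})_+$, $\varepsilon_i(b)=\bar x_i+(x_{i+1}-\bar x_{i+1})_+$ ($1\le i\le n-1$); $\varphi_n(b)=x_n$, $\varepsilon_n(b)=\bar x_n$. For $\lambda=l\Lambda_0$: $\lambda_j=l\Lambda_0$ and $\overline b_j=(0,\dots,0)$ for all $j$; $\langle\lambda_j,h_i\rangle$ is the coefficient of $\Lambda_i$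 in $\lambda_j$. Given $d$, $i^{(j)}_a$: $B^{(j)}_0=\{\overline b_j\}$, $B^{(j)}_a=\bigcup_{n\ge0}\tilde f_{i^{(j)}_a}^nB^{(j)}_{a-1}\setminus\{0\}$; $b^{(j)}_0=\overline b_j$, $b^{(j)}_a=\tilde f_{i^{(j)}_a}^{\varphi_{i^{(j)}_a}(b^{(j)}_{a-1})}b^{(j)}_{a-1}$. *)

theory Defs
  imports Main
begin

text \<open>Crystal elements b = (x_1,...,x_n, xbar_n,...,xbar_1) are represented as
  int lists of length 2n: x_i is at position i-1 and xbar_i at position 2n-i.
  The value 0 (outside B) is modelled by None.\<close>

definition xc :: "int list \<Rightarrow> nat \<Rightarrow> int" where
  "xc b i = b ! (i - 1)"

definition xbar :: "nat \<Rightarrow> int list \<Rightarrow> nat \<Rightarrow> int" where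
  "xbar n b i = b ! (2 * n - i)"

definition mkb :: "nat \<Rightarrow> (nat \<Rightarrow> int) \<Rightarrow> (nat \<Rightarrow> int) \<Rightarrow> int list" where
  "mkb n x xb = map x [1..<n+1] @ map xb (rev [1..<n+1])"

definition crysB :: "nat \<Rightarrow> nat \<Rightarrow> int list set" where
  "crysB n l = {b. length b = 2 * n \<and> (\<forall>k < 2 * n. 0 \<le> b ! k) \<and> sum_list b \<le> int l}"

definition pos :: "int \<Rightarrow> int" where
  "pos x = max x 0"

definition sB :: "int list \<Rightarrow> int" where
  "sB b = sum_list b"

definition fraw :: "nat \<Rightarrow> nat \<Rightarrow> int list \<Rightarrow> int list" where
  "fraw n i b =
    (if i = 0 then
       (if xc b 1 \<ge> xbar n b 1 then b[0 := xc b 1 + 1]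
        else b[2 * n - 1 := xbar n b 1 - 1])
     else if i < n then
       (if xc b (i + 1) \<ge> xbar n b (i + 1)
        then b[i - 1 := xc b i - 1, i := xc b (i + 1) + 1]
        else b[2 * n - (i + 1) := xbar n b (i + 1) - 1, 2 * n - i := xbar n b i + 1])
     else if i = n then b[n - 1 := xc b n - 1, n := xbar n b n + 1]
     else b)"

definition ftil :: "nat \<Rightarrow> nat \<Rightarrow> nat \<Rightarrow> int list \<Rightarrow> int list option" where
  "ftil n l i b = (if b \<in> crysB n l \<and> i \<le> n \<and> fraw n i b \<in> crysB n l
                   then Some (fraw n i b) else None)"

primrec fpow :: "nat \<Rightarrow> nat \<Rightarrow> nat \<Rightarrow> nat \<Rightarrow> int list \<Rightarrow> int list option" where
  "fpow n l i 0 b = Some b"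
| "fpow n l i (Suc k) b = Option.bind (fpow n l i k b) (ftil n l i)"

definition phi :: "nat \<Rightarrow> nat \<Rightarrow> nat \<Rightarrow> int list \<Rightarrow> int" where
  "phi n l i b =
    (if i = 0 then int l - sB b + 2 * pos (xbar n b 1 - xc b 1)
     else if i < n then xc b i + pos (xbar n b (i + 1) - xc b (i + 1))
     else if i = n then xc b n
     else 0)"

definition eps :: "nat \<Rightarrow> nat \<Rightarrow> nat \<Rightarrow> int list \<Rightarrow> int" where
  "eps n l i b =
    (if i = 0 then int l - sB b + 2 * pos (xc b 1 - xbar n b 1)
     else if i < n then xbar n b i + pos (xc b (i + 1) - xbar n b (i + 1))
     else if i = n then xbar n b n
     else 0)"

text \<open>lambda_j = l Lambda_0 for all j; pairing with h_i = coefficient of Lambda_i.\<close>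
definition lamh :: "nat \<Rightarrow> nat \<Rightarrow> nat \<Rightarrow> nat" where
  "lamh l j i = (if i = 0 then l else 0)"

definition iseq :: "nat \<Rightarrow> nat \<Rightarrow> nat \<Rightarrow> nat" where
  "iseq n j a = (if a \<le> n + 1 then a - 1 else 2 * n + 1 - a)"

definition inext :: "nat \<Rightarrow> nat \<Rightarrow> nat \<Rightarrow> nat" where
  "inext n j a = (if a = 2 * n then iseq n (j + 1) 1 else iseq n j (a + 1))"

definition bbar :: "nat \<Rightarrow> int list" where
  "bbar n = mkb n (\<lambda>_. 0) (\<lambda>_. 0)"

fun Bset :: "nat \<Rightarrow> nat \<Rightarrow> nat \<Rightarrow> nat \<Rightarrow> int list set" where
  "Bset n l j 0 = {bbar n}"
| "Bset n l j (Suc a) =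
     {b'. \<exists>b \<in> Bset n l j a. \<exists>k. fpow n l (iseq n j (Suc a)) k b = Some b'}"

fun bseq :: "nat \<Rightarrow> nat \<Rightarrow> nat \<Rightarrow> nat \<Rightarrow> int list option" where
  "bseq n l j 0 = Some (bbar n)"
| "bseq n l j (Suc a) = Option.bind (bseq n l j a)
     (\<lambda>b. fpow n l (iseq n j (Suc a)) (nat (phi n l (iseq n j (Suc a)) b)) b)"

end

theory Submission
  imports Defs
begin

lemma sum_list_upd: "k < length xs \<Longrightarrow> sum_list (xs[k:=v]) = sum_list xs - xs!k + (v::int)"
  by (induction xs arbitrary: k) (auto split: nat.splits)

lemma crysB_mem: "b \<in> crysB n l \<longleftrightarrow> length b = 2*n \<and> (\<forall>k<2*n. 0 \<le> b!k) \<and> sum_list b \<le> int l"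
  by (simp add: crysB_def)

lemma crys_transfer:
  assumes "b \<in> crysB n l" "p < 2*n" "q < 2*n" "p \<noteq> q" "b!q \<ge> 1"
  shows "b[p := b!p + 1, q := b!q - 1] \<in> crysB n l"
  using assms by (auto simp: crysB_mem sum_list_upd nth_list_update)

lemma crys_dec:
  assumes "b \<in> crysB n l" "p < 2*n" "b!p \<ge> 1"
  shows "b[p := b!p - 1] \<in> crysB n l"
  using assms by (auto simp: crysB_mem sum_list_upd nth_list_update)

lemma crys_inc:
  assumes "b \<in> crysB n l" "p < 2*n" "sum_list b < int l"
  shows "b[p := b!p + 1] \<in> crysB n l"
  using assms by (auto simp: crysB_mem sum_list_upd nth_list_update)

lemma fpow_closed:
  assumes "\<And>b b'. b \<in> X \<Longrightarrow> ftil n l i b = Some b' \<Longrightarrow> b' \<in> X"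
  shows "b \<in> X \<Longrightarrow> fpow n l i k b = Some b' \<Longrightarrow> b' \<in> X"
proof (induction k arbitrary: b')
  case 0 then show ?case by simp
next
  case (Suc k)
  then obtain c where "fpow n l i k b = Some c" "ftil n l i c = Some b'"
    by (cases "fpow n l i k b") auto
  then show ?case using Suc assms by blast
qed

lemma fpow_chain:
  "(\<forall>t<k. ftil n l i (c t) = Some (c (Suc t))) \<Longrightarrow> fpow n l i k (c 0) = Some (c k)"
  by (induction k) auto

lemma Bset_mono: "Bset n l j a \<subseteq> Bset n l j (Suc a)"
proof
  fix b assume "b \<in> Bset n l j a"
  moreover have "fpow n l (iseq n j (Suc a)) 0 b = Some b" by simp
  ultimately show "b \<in> Bset n l j (Suc a)" by (simp only: Bset.simps) blast
qed

lemma Bset_closed: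
  assumes "b \<in> Bset n l j (Suc a)" "ftil n l (iseq n j (Suc a)) b = Some b'"
  shows "b' \<in> Bset n l j (Suc a)"
proof -
  from assms(1) obtain b0 k where b0: "b0 \<in> Bset n l j a" "fpow n l (iseq n j (Suc a)) k b0 = Some b"
    by auto
  then have "fpow n l (iseq n j (Suc a)) (Suc k) b0 = Some b'" using assms(2) by simp
  with b0 show ?thesis by (simp only: Bset.simps) blast
qed

lemma bbar_eq: "bbar n = replicate (2*n) 0"
  by (simp add: bbar_def mkb_def map_replicate_const mult_2 replicate_add del: upt_Suc)

lemma nth_mkb: "p < 2*n \<Longrightarrow> mkb n x xb ! p = (if p < n then x (p+1) else xb (2*n-p))"
proof -
  assume p: "p < 2*n"
  have L: "length (map x [1..<n+1]) = n" by simp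
  show ?thesis
  proof (cases "p < n")
    case True then show ?thesis unfolding mkb_def by (simp add: nth_append del: upt_Suc)
  next
    case False
    then have "mkb n x xb ! p = map xb (rev [1..<n+1]) ! (p - n)"
      unfolding mkb_def by (simp add: nth_append del: upt_Suc)
    also have "\<dots> = xb (2*n-p)" using p False by (simp add: rev_nth Suc_diff_Suc mult_2 del: upt_Suc)
    finally show ?thesis using False by simp
  qed
qed

definition Pset :: "nat \<Rightarrow> nat \<Rightarrow> nat \<Rightarrow> int list set" where
  "Pset n l a = {b \<in> crysB n l. \<forall>p<2*n. a \<le> p \<longrightarrow> b!p = 0}"

lemma iseq_Suc: "iseq n j (Suc a) = (if a \<le> n then a else 2*n - a)"
  by (simp add: iseq_def)

lemma P_closed:
  assumes n: "n \<ge> 2" and a: "a < 2*n" and b: "b \<in> Pset n l (Suc a)"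
    and f: "ftil n l (iseq n j (Suc a)) b = Some b'"
  shows "b' \<in> Pset n l (Suc a)"
proof -
  let ?i = "iseq n j (Suc a)"
  have b': "b' = fraw n ?i b" "b' \<in> crysB n l" using f by (auto simp: ftil_def split: if_splits)
  have len: "length b = 2*n" and z: "\<And>p. p < 2*n \<Longrightarrow> Suc a \<le> p \<Longrightarrow> b!p = 0"
    and nn: "\<And>p. p < 2*n \<Longrightarrow> 0 \<le> b!p"
    using b by (auto simp: Pset_def crysB_def)
  have "\<forall>p<2*n. Suc a \<le> p \<longrightarrow> b'!p = 0"
  proof (intro allI impI)
    fix p assume p: "p < 2*n" "Suc a \<le> p"
    consider "a = 0" | "0 < a" "a < n" | "a = n" | "n < a" by linarith
    then show "b'!p = 0"
    proof cases
      case 1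
      have "b!(2*n-1) = 0" using z[of "2*n-1"] n 1 by simp
      moreover have "0 \<le> b!0" using nn n by simp
      ultimately show ?thesis using b' 1 p z len n
        by (auto simp: fraw_def iseq_Suc xc_def xbar_def nth_list_update)
    next
      case 2
      have "b!(2*n-Suc a) = 0" using z[of "2*n-Suc a"] 2 by simp
      moreover have "0 \<le> b!a" using nn 2 by simp
      ultimately show ?thesis using b' 2 p z len n
        by (auto simp: fraw_def iseq_Suc xc_def xbar_def nth_list_update)
    next
      case 3
      then show ?thesis using b' p z len n
        by (auto simp: fraw_def iseq_Suc xc_def xbar_def nth_list_update)
    next
      case 4
      then show ?thesis using b' p z len n a
        by (auto simp: fraw_def iseq_Suc xc_def xbar_def nth_list_update)
    qed
  qed
  then show ?thesis using b' by (simp add: Pset_def)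
qed

lemma fraw_0a: "xc b 1 \<ge> xbar n b 1 \<Longrightarrow> fraw n 0 b = b[0 := b!0 + 1]"
  by (simp add: fraw_def xc_def)
lemma fraw_0b: "xc b 1 < xbar n b 1 \<Longrightarrow> fraw n 0 b = b[2*n-1 := b!(2*n-1) - 1]"
  by (simp add: fraw_def xbar_def)
lemma fraw_1: "0 < i \<Longrightarrow> i < n \<Longrightarrow> xc b (i+1) \<ge> xbar n b (i+1) \<Longrightarrow>
   fraw n i b = b[i-1 := b!(i-1) - 1, i := b!i + 1]"
  by (simp add: fraw_def xc_def)
lemma fraw_2: "0 < i \<Longrightarrow> i < n \<Longrightarrow> xc b (i+1) < xbar n b (i+1) \<Longrightarrow>
   fraw n i b = b[2*n-(i+1) := b!(2*n-(i+1)) - 1, 2*n-i := b!(2*n-i) + 1]"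
  by (simp add: fraw_def xbar_def)
lemma fraw_n: "0 < n \<Longrightarrow> fraw n n b = b[n-1 := b!(n-1) - 1, n := b!n + 1]"
  by (simp add: fraw_def xc_def xbar_def)
lemma undo: "c = (b::int list)[p := b!p + 1, q := b!q - 1] \<Longrightarrow> p < length b \<Longrightarrow> q < length b \<Longrightarrow> p \<noteq> q \<Longrightarrow>
  c[p := c!p - 1, q := c!q + 1] = b"
  by (simp add: nth_list_update list_update_swap[of p q] diff_add_cancel add_diff_cancel_right')

definition mu :: "nat \<Rightarrow> nat \<Rightarrow> int list \<Rightarrow> nat" where
  "mu n a b = nat (b!a + (if n < a then b!(2*n-a) else 0))"

lemma P_pred:
  assumes n: "n \<ge> 2" and a: "a < 2*n" and b: "b \<in> Pset n l (Suc a)" and pa: "b!a > 0"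
  shows "\<exists>c \<in> Pset n l (Suc a). ftil n l (iseq n j (Suc a)) c = Some b \<and> mu n a c < mu n a b"
proof -
  have bc: "b \<in> crysB n l" and len: "length b = 2*n" and z: "\<And>p. p < 2*n \<Longrightarrow> Suc a \<le> p \<Longrightarrow> b!p = 0"
    and nn: "\<And>p. p < 2*n \<Longrightarrow> 0 \<le> b!p"
    using b by (auto simp: Pset_def crysB_def)
  consider "a = 0" | "0 < a" "a \<le> n" | "n < a" "b!(2*n-a) > b!(a-1)" | "n < a" "b!(2*n-a) \<le> b!(a-1)" by linarith
  then show ?thesis
  proof cases
    case 1
    define c where "c = b[0 := b!0 - 1]"
    have cc: "c \<in> crysB n l" unfolding c_def using crys_dec[OF bc, of 0] pa 1 n by simp
    have cP: "c \<in> Pset n l (Suc a)" using cc z 1 by (auto simp: Pset_def c_def nth_list_update)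
    have "b!(2*n-1) = 0" using z[of "2*n-1"] n 1 by simp
    then have "xc c 1 \<ge> xbar n c 1" using 1 n len pa by (simp add: c_def xc_def xbar_def nth_list_update)
    then have fr: "fraw n 0 c = b" using len n by (simp add: fraw_0a c_def)
    have "ftil n l (iseq n j (Suc a)) c = Some b" using fr cc bc 1 by (simp add: ftil_def iseq_Suc)
    moreover have "mu n a c < mu n a b" using 1 pa len n by (simp add: mu_def c_def)
    ultimately show ?thesis using cP by blast
  next
    case 2
    define c where "c = b[a-1 := b!(a-1) + 1, a := b!a - 1]"
    have cc: "c \<in> crysB n l" unfolding c_def using crys_transfer[OF bc, of "a-1" a] pa 2 n by simp
    have cP: "c \<in> Pset n l (Suc a)" using cc z 2 by (auto simp: Pset_def c_def nth_list_update)
    have "a < n \<Longrightarrow> b!(2*n-Suc a) = 0" using z[of "2*n-Suc a"] 2 by simp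
    have fr: "fraw n a c = b"
    proof (cases "a < n")
      case True
      with \<open>a < n \<Longrightarrow> b!(2*n-Suc a) = 0\<close> have "xc c (a+1) \<ge> xbar n c (a+1)"
        using 2 len pa by (simp add: c_def xc_def xbar_def nth_list_update)
      then have "fraw n a c = c[a-1 := c!(a-1) - 1, a := c!a + 1]" using fraw_1 True 2 by blast
      then show ?thesis using undo[OF c_def] len 2 n by simp
    next
      case False
      then have "a = n" using 2 by simp
      then show ?thesis using undo[OF c_def] fraw_n[of n c] len 2 n by simp
    qed
    have "ftil n l (iseq n j (Suc a)) c = Some b" using fr cc bc 2 by (simp add: ftil_def iseq_Suc)
    moreover have "mu n a c < mu n a b" using 2 pa len n by (simp add: mu_def c_def nth_list_update)
    ultimately show ?thesis using cP by blast
  next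
    case 3
    define i where "i = 2*n - a"
    have i: "1 \<le> i" "i < n" "Suc i \<le> n" "2*n - Suc i = a - 1" "2*n - i = a" "i - 1 < a - 1" using 3 a by (auto simp: i_def)
    have "0 \<le> b!(a-1)" using nn[of "a-1"] a by simp
    then have pi: "b!i > 0" using 3 unfolding i_def by linarith
    define c where "c = b[i-1 := b!(i-1) + 1, i := b!i - 1]"
    have cc: "c \<in> crysB n l" unfolding c_def using crys_transfer[OF bc, of "i-1" i] pi i by simp
    have cP: "c \<in> Pset n l (Suc a)" using cc z i by (auto simp: Pset_def c_def nth_list_update)
    have "xc c (i+1) \<ge> xbar n c (i+1)" using 3 i len pi unfolding c_def xc_def xbar_def
      by (simp add: nth_list_update i_def)
    then have "fraw n i c = c[i-1 := c!(i-1) - 1, i := c!i + 1]" using fraw_1 i by simp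
    then have fr: "fraw n i c = b" using undo[OF c_def] len i n by simp
    have "ftil n l (iseq n j (Suc a)) c = Some b" using fr cc bc 3 i by (simp add: ftil_def iseq_Suc i_def)
    moreover have "mu n a c < mu n a b" using 3 i pa pi len n nn[of a] by (simp add: mu_def c_def nth_list_update i_def)
    ultimately show ?thesis using cP by blast
  next
    case 4
    define i where "i = 2*n - a"
    have i: "1 \<le> i" "i < n" "Suc i \<le> n" "2*n - Suc i = a - 1" "2*n - i = a" "i - 1 < a - 1" using 4 a by (auto simp: i_def)
    define c where "c = b[a-1 := b!(a-1) + 1, a := b!a - 1]"
    have cc: "c \<in> crysB n l" unfolding c_def using crys_transfer[OF bc, of "a-1" a] pa a 4 by simp
    have cP: "c \<in> Pset n l (Suc a)" using cc z 4 by (auto simp: Pset_def c_def nth_list_update)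
    have "xc c (i+1) < xbar n c (i+1)" using 4 i len pa unfolding c_def xc_def xbar_def
      by (simp add: nth_list_update i_def)
    then have "fraw n i c = c[a-1 := c!(a-1) - 1, a := c!a + 1]" using fraw_2[of i n c] i by simp
    then have fr: "fraw n i c = b" using undo[OF c_def] len i a by simp
    have "ftil n l (iseq n j (Suc a)) c = Some b" using fr cc bc 4 i by (simp add: ftil_def iseq_Suc i_def)
    moreover have "mu n a c < mu n a b" using 4 i pa len n nn[of i] by (simp add: mu_def c_def nth_list_update i_def)
    ultimately show ?thesis using cP by blast
  qed
qed

lemma P0: "Pset n l 0 = {replicate (2*n) 0}"
  by (auto simp: Pset_def crysB_def sum_list_replicate intro!: nth_equalityI)

lemma P_mono: "Pset n l a \<subseteq> Pset n l (Suc a)"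
  by (auto simp: Pset_def)

lemma Bset_P:
  assumes n: "n \<ge> 2"
  shows "a \<le> 2*n \<Longrightarrow> Bset n l j a = Pset n l a"
proof (induction a)
  case 0 then show ?case by (simp add: bbar_eq P0)
next
  case (Suc a)
  then have IH: "Bset n l j a = Pset n l a" and a: "a < 2*n" by auto
  show ?case
  proof
    show "Bset n l j (Suc a) \<subseteq> Pset n l (Suc a)"
    proof
      fix b' assume "b' \<in> Bset n l j (Suc a)"
      then obtain b k where bk: "b \<in> Bset n l j a" "fpow n l (iseq n j (Suc a)) k b = Some b'" by auto
      have hb: "b \<in> Pset n l (Suc a)" using bk(1) IH P_mono by blast
      show "b' \<in> Pset n l (Suc a)"
      proof (rule fpow_closed[of "Pset n l (Suc a)" n l "iseq n j (Suc a)"])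
        show "\<And>b b'. b \<in> Pset n l (Suc a) \<Longrightarrow> ftil n l (iseq n j (Suc a)) b = Some b' \<Longrightarrow> b' \<in> Pset n l (Suc a)"
          using P_closed[OF n a] by blast
      qed (use bk(2) hb in auto)
    qed
  next
    have "\<forall>b. mu n a b = m \<longrightarrow> b \<in> Pset n l (Suc a) \<longrightarrow> b \<in> Bset n l j (Suc a)" for m
    proof (induction m rule: less_induct)
      case (less m)
      show ?case
      proof (intro allI impI)
        fix b assume m: "mu n a b = m" and b: "b \<in> Pset n l (Suc a)"
        show "b \<in> Bset n l j (Suc a)"
        proof (cases "b!a > 0")
          case True
          obtain c where c: "c \<in> Pset n l (Suc a)" "ftil n l (iseq n j (Suc a)) c = Some b" "mu n a c < mu n a b"
            using P_pred[OF n a b True] by blast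
          then have "c \<in> Bset n l j (Suc a)" using less m by blast
          then show ?thesis using Bset_closed c(2) by blast
        next
          case False
          then have "b!a = 0" using b a by (force simp: Pset_def crysB_def)
          then have "b \<in> Pset n l a" using b by (auto simp: Pset_def le_less Suc_le_eq)
          then show ?thesis using IH Bset_mono by blast
        qed
      qed
    qed
    then show "Pset n l (Suc a) \<subseteq> Bset n l j (Suc a)" by blast
  qed
qed

lemma Zsum2: "p < 2*n \<Longrightarrow> q < 2*n \<Longrightarrow> p \<noteq> q \<Longrightarrow> sum_list ((replicate (2*n) 0)[p := u, q := v]) = u + (v::int)"
  by (simp add: sum_list_upd sum_list_replicate nth_list_update)

lemma Zsum1: "p < 2*n \<Longrightarrow> sum_list ((replicate (2*n) 0)[p := u]) = (u::int)"
  by (simp add: sum_list_upd sum_list_replicate)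

lemma Zcrys2: "p < 2*n \<Longrightarrow> q < 2*n \<Longrightarrow> p \<noteq> q \<Longrightarrow> 0 \<le> u \<Longrightarrow> 0 \<le> v \<Longrightarrow> u + v \<le> int l \<Longrightarrow>
  (replicate (2*n) 0)[p := u, q := v] \<in> crysB n l"
  by (simp add: crysB_mem Zsum2 nth_list_update)

lemma Zcrys1: "p < 2*n \<Longrightarrow> 0 \<le> u \<Longrightarrow> u \<le> int l \<Longrightarrow>
  (replicate (2*n) 0)[p := u] \<in> crysB n l"
  by (simp add: crysB_mem Zsum1 nth_list_update)

lemma Zupd0: "p < 2*n \<Longrightarrow> (replicate (2*n) (0::int))[p := 0] = replicate (2*n) 0"
  by (rule nth_equalityI) (auto simp: nth_list_update)

lemma phi_step:
  assumes n: "n \<ge> 2" and a: "1 \<le> a" "a < 2*n"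
  shows "phi n l (iseq n j (Suc a)) ((replicate (2*n) 0)[a-1 := int l]) = int l"
proof -
  consider "a < n" | "a = n" | "n < a" by linarith
  then show ?thesis
  proof cases
    case 1 then show ?thesis using n a
      by (simp add: phi_def iseq_Suc xc_def xbar_def nth_list_update pos_def)
  next
    case 2 then show ?thesis using n a
      by (simp add: phi_def iseq_Suc xc_def xbar_def nth_list_update pos_def)
  next
    case 3
    have h: "2*n - a < n" using 3 a by arith
    show ?thesis using n a 3 h
      by (simp add: phi_def iseq_Suc xc_def xbar_def nth_list_update pos_def)
  qed
qed

lemma eps_step:
  assumes n: "n \<ge> 2" and a: "1 \<le> a" "a < 2*n"
  shows "eps n l (iseq n j (Suc a)) ((replicate (2*n) 0)[a-1 := int l]) = 0"
proof -
  consider "a < n" | "a = n" | "n < a" by linarith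
  then show ?thesis
  proof cases
    case 1 then show ?thesis using n a
      by (simp add: eps_def iseq_Suc xc_def xbar_def nth_list_update pos_def)
  next
    case 2 then show ?thesis using n a
      by (simp add: eps_def iseq_Suc xc_def xbar_def nth_list_update pos_def)
  next
    case 3
    have h: "2*n - a < n" using 3 a by arith
    show ?thesis using n a 3 h
      by (simp add: eps_def iseq_Suc xc_def xbar_def nth_list_update pos_def)
  qed
qed

lemma upd4: "p \<noteq> q \<Longrightarrow> xs[p:=u, q:=v, p:=u', q:=v'] = xs[p:=u', q:=v']"
  by (metis list_update_overwrite list_update_swap)

lemma fpow_step:
  assumes n: "n \<ge> 2" and a: "1 \<le> a" "a < 2*n"
  shows "fpow n l (iseq n j (Suc a)) l ((replicate (2*n) 0)[a-1 := int l]) = Some ((replicate (2*n) 0)[a := int l])"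
proof -
  let ?Z = "replicate (2*n) (0::int)"
  define c where "c t = ?Z[a-1 := int l - int t, a := int t]" for t
  have c0: "c 0 = ?Z[a-1 := int l]" unfolding c_def using a
    by (intro nth_equalityI) (auto simp: nth_list_update)
  have cl: "c l = ?Z[a := int l]" unfolding c_def using a
    by (intro nth_equalityI) (auto simp: nth_list_update)
  have step: "ftil n l (iseq n j (Suc a)) (c t) = Some (c (Suc t))" if t: "t < l" for t
  proof -
    have cc: "c t \<in> crysB n l" "c (Suc t) \<in> crysB n l" unfolding c_def using a t by (auto intro!: Zcrys2)
    have len: "length (c t) = 2*n" by (simp add: c_def)
    have fr: "fraw n (iseq n j (Suc a)) (c t) = c (Suc t)"
    proof -
      consider "a < n" | "a = n" | "n < a" by linarith
      then show ?thesis
      proof cases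
        case 1
        have "xc (c t) (a+1) \<ge> xbar n (c t) (a+1)" using 1 a unfolding c_def xc_def xbar_def
          by (simp add: nth_list_update)
        then have "fraw n a (c t) = (c t)[a-1 := (c t)!(a-1) - 1, a := (c t)!a + 1]" using fraw_1 1 a by simp
        then show ?thesis using 1 a by (simp add: iseq_Suc c_def nth_list_update upd4 algebra_simps)
      next
        case 2
        then show ?thesis using fraw_n[of n "c t"] n a by (simp add: iseq_Suc c_def nth_list_update upd4 algebra_simps)
      next
        case 3
        define i where "i = 2*n - a"
        have i: "1 \<le> i" "i < n" "2*n - Suc i = a - 1" "2*n - i = a" "i < a - 1" "Suc i \<le> n" using 3 a by (auto simp: i_def)
        have "xc (c t) (i+1) < xbar n (c t) (i+1)" using i t unfolding c_def xc_def xbar_def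
          by (simp add: nth_list_update)
        then have "fraw n i (c t) = (c t)[a-1 := (c t)!(a-1) - 1, a := (c t)!a + 1]" using fraw_2[of i n "c t"] i by simp
        moreover have ne: "a - Suc 0 \<noteq> a" using 3 by arith
        ultimately show ?thesis using 3 a by (simp add: iseq_Suc c_def nth_list_update i_def upd4[OF ne] algebra_simps)
      qed
    qed
    have "iseq n j (Suc a) \<le> n" using a unfolding iseq_Suc by arith
    then show ?thesis using cc fr by (simp add: ftil_def)
  qed
  have "fpow n l (iseq n j (Suc a)) l (c 0) = Some (c l)"
    by (rule fpow_chain) (use step in auto)
  then show ?thesis using c0 cl by simp
qed

lemma fpow_first:
  assumes n: "n \<ge> 2"
  shows "fpow n l 0 l (replicate (2*n) 0) = Some ((replicate (2*n) 0)[0 := int l])"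
proof -
  let ?Z = "replicate (2*n) (0::int)"
  define c where "c t = ?Z[0 := int t]" for t
  have c0: "c 0 = ?Z" unfolding c_def using n by (simp add: Zupd0)
  have step: "ftil n l 0 (c t) = Some (c (Suc t))" if t: "t < l" for t
  proof -
    have cc: "c t \<in> crysB n l" "c (Suc t) \<in> crysB n l" unfolding c_def using n t by (auto intro!: Zcrys1)
    have "xc (c t) 1 \<ge> xbar n (c t) 1" using n unfolding c_def xc_def xbar_def by (simp add: nth_list_update)
    then have "fraw n 0 (c t) = c (Suc t)" using fraw_0a n by (simp add: c_def algebra_simps)
    then show ?thesis using cc by (simp add: ftil_def)
  qed
  have "fpow n l 0 l (c 0) = Some (c l)"
    by (rule fpow_chain) (use step in auto)
  then show ?thesis using c0 by (simp add: c_def)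
qed

lemma fpow_last:
  assumes n: "n \<ge> 2"
  shows "fpow n l 0 l ((replicate (2*n) 0)[2*n-1 := int l]) = Some (replicate (2*n) 0)"
proof -
  let ?Z = "replicate (2*n) (0::int)"
  define c where "c t = ?Z[2*n-1 := int l - int t]" for t
  have cl: "c l = ?Z" unfolding c_def using n by (simp add: Zupd0)
  have step: "ftil n l 0 (c t) = Some (c (Suc t))" if t: "t < l" for t
  proof -
    have cc: "c t \<in> crysB n l" "c (Suc t) \<in> crysB n l" unfolding c_def using n t by (auto intro!: Zcrys1)
    have "xc (c t) 1 < xbar n (c t) 1" using n t unfolding c_def xc_def xbar_def by (simp add: nth_list_update)
    then have "fraw n 0 (c t) = c (Suc t)" using fraw_0b n by (simp add: c_def algebra_simps)
    then show ?thesis using cc by (simp add: ftil_def)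
  qed
  have "fpow n l 0 l (c 0) = Some (c l)"
    by (rule fpow_chain) (use step in auto)
  then show ?thesis using cl by (simp add: c_def)
qed

lemma bseq_val:
  assumes n: "n \<ge> 2"
  shows "1 \<le> a \<Longrightarrow> a \<le> 2*n \<Longrightarrow> bseq n l j a = Some ((replicate (2*n) 0)[a-1 := int l])"
proof (induction a)
  case 0 then show ?case by simp
next
  case (Suc a)
  show ?case
  proof (cases "a = 0")
    case True
    have "phi n l 0 (replicate (2*n) 0) = int l" using n
      by (simp add: phi_def sB_def sum_list_replicate xc_def xbar_def pos_def)
    then show ?thesis using True fpow_first[OF n, of l] by (simp add: bbar_eq iseq_def)
  next
    case False
    then have IH: "bseq n l j a = Some ((replicate (2*n) 0)[a-1 := int l])" using Suc by simp
    show ?thesis using IH phi_step[OF n, of a l j] fpow_step[OF n, of a l j] False Suc.prems by simp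
  qed
qed

lemma length_mkb: "length (mkb n x xb) = 2*n"
  by (simp add: mkb_def)

lemma Pset_low:
  assumes "1 \<le> a" "a \<le> n"
  shows "Pset n l a = {b \<in> crysB n l. (\<forall>i. a < i \<and> i \<le> n \<longrightarrow> xc b i = 0)
                                       \<and> (\<forall>i. 1 \<le> i \<and> i \<le> n \<longrightarrow> xbar n b i = 0)}"
proof (intro set_eqI iffI)
  fix b assume b: "b \<in> Pset n l a"
  then show "b \<in> {b \<in> crysB n l. (\<forall>i. a < i \<and> i \<le> n \<longrightarrow> xc b i = 0)
                                       \<and> (\<forall>i. 1 \<le> i \<and> i \<le> n \<longrightarrow> xbar n b i = 0)}"
    using assms by (auto simp: Pset_def xc_def xbar_def)
next
  fix b assume b: "b \<in> {b \<in> crysB n l. (\<forall>i. a < i \<and> i \<le> n \<longrightarrow> xc b i = 0)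
                                       \<and> (\<forall>i. 1 \<le> i \<and> i \<le> n \<longrightarrow> xbar n b i = 0)}"
  have "b!p = 0" if p: "p < 2*n" "a \<le> p" for p
  proof (cases "p < n")
    case True
    have "\<forall>i. a < i \<and> i \<le> n \<longrightarrow> xc b i = 0" using b by simp
    then have "xc b (p+1) = 0" using True p by simp
    then show ?thesis by (simp add: xc_def)
  next
    case False
    have "\<forall>i. 1 \<le> i \<and> i \<le> n \<longrightarrow> xbar n b i = 0" using b by simp
    moreover have "1 \<le> 2*n-p" "2*n-p \<le> n" using p False by arith+
    ultimately have "xbar n b (2*n-p) = 0" by blast
    then show ?thesis using p False by (simp add: xbar_def)
  qed
  then show "b \<in> Pset n l a" using b by (auto simp: Pset_def)
qed

lemma Pset_high:
  assumes "1 \<le> a" "a \<le> n - 1"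
  shows "Pset n l (n + a) = {b \<in> crysB n l. \<forall>i. 1 \<le> i \<and> i \<le> n - a \<longrightarrow> xbar n b i = 0}"
proof (intro set_eqI iffI)
  fix b assume b: "b \<in> Pset n l (n+a)"
  then show "b \<in> {b \<in> crysB n l. \<forall>i. 1 \<le> i \<and> i \<le> n - a \<longrightarrow> xbar n b i = 0}"
    using assms by (auto simp: Pset_def xbar_def)
next
  fix b assume b: "b \<in> {b \<in> crysB n l. \<forall>i. 1 \<le> i \<and> i \<le> n - a \<longrightarrow> xbar n b i = 0}"
  have "b!p = 0" if p: "p < 2*n" "n + a \<le> p" for p
  proof -
    have "\<forall>i. 1 \<le> i \<and> i \<le> n - a \<longrightarrow> xbar n b i = 0" using b by simp
    moreover have "1 \<le> 2*n-p" "2*n-p \<le> n - a" using p by arith+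
    ultimately have "xbar n b (2*n-p) = 0" by blast
    then show ?thesis using p by (simp add: xbar_def)
  qed
  then show "b \<in> Pset n l (n+a)" using b by (auto simp: Pset_def)
qed

theorem mainTheorem6:
  fixes n l :: nat
  assumes "n \<ge> 2" and "l \<ge> 1"
  shows
    "(\<forall>j \<ge> 1. Bset n l j (2 * n) = crysB n l)
   \<and> (\<forall>j \<ge> 1. \<forall>a. 1 \<le> a \<and> a \<le> 2 * n \<longrightarrow>
        (\<forall>b \<in> Bset n l j (a - 1). int (lamh l j (iseq n j a)) \<le> eps n l (iseq n j a) b))
   \<and> (\<forall>j \<ge> 1. (\<forall>a. 1 \<le> a \<and> a \<le> 2 * n \<longrightarrow>
          (\<exists>b. bseq n l j a = Some b \<and> eps n l (inext n j a) b = 0 \<and> phi n l (inext n j a) b > 0))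
        \<and> bseq n l (j + 1) 0 =
            Option.bind (bseq n l j (2 * n))
              (fpow n l (iseq n (j + 1) 1) (lamh l (j + 1) (iseq n (j + 1) 1))))
   \<and> (\<forall>j \<ge> 1.
        Bset n l j 0 = {mkb n (\<lambda>_. 0) (\<lambda>_. 0)}
      \<and> Bset n l j (2 * n) = crysB n l
      \<and> (\<forall>a. 1 \<le> a \<and> a \<le> n \<longrightarrow>
           Bset n l j a = {b \<in> crysB n l. (\<forall>i. a < i \<and> i \<le> n \<longrightarrow> xc b i = 0)
                                       \<and> (\<forall>i. 1 \<le> i \<and> i \<le> n \<longrightarrow> xbar n b i = 0)})
      \<and> (\<forall>a. 1 \<le> a \<and> a \<le> n - 1 \<longrightarrow>
           Bset n l j (n + a) = {b \<in> crysB n l. \<forall>i. 1 \<le> i \<and> i \<le> n - a \<longrightarrow> xbar n b i = 0})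
      \<and> bseq n l j 0 = Some (mkb n (\<lambda>_. 0) (\<lambda>_. 0))
      \<and> (\<forall>a. 1 \<le> a \<and> a \<le> n \<longrightarrow>
           bseq n l j a = Some (mkb n (\<lambda>i. if i = a then int l else 0) (\<lambda>_. 0))
         \<and> bseq n l j (n + a) = Some (mkb n (\<lambda>_. 0) (\<lambda>i. if i = n - a + 1 then int l else 0))))"
proof -
  let ?Z = "replicate (2*n) (0::int)"
  have n: "n \<ge> 2" using assms by simp
  have l: "l \<ge> 1" using assms by simp
  have BP: "\<And>j a. a \<le> 2*n \<Longrightarrow> Bset n l j a = Pset n l a" using Bset_P[OF n] by blast
  have Ptop: "Pset n l (2*n) = crysB n l" by (auto simp: Pset_def)
  have B2n: "\<And>j. Bset n l j (2*n) = crysB n l" using BP Ptop by simp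
  have bs: "\<And>j a. 1 \<le> a \<Longrightarrow> a \<le> 2*n \<Longrightarrow> bseq n l j a = Some (?Z[a-1 := int l])"
    using bseq_val[OF n] by blast
  have Zeps0: "eps n l 0 ?Z = int l" using n
    by (simp add: eps_def sB_def sum_list_replicate xc_def xbar_def pos_def)
  have P2: "int (lamh l j (iseq n j a)) \<le> eps n l (iseq n j a) b"
    if a: "1 \<le> a" "a \<le> 2*n" and b: "b \<in> Bset n l j (a - 1)" for j a b
  proof (cases "a = 1")
    case True
    then have "b = ?Z" using b by (simp add: bbar_eq)
    then show ?thesis using True Zeps0 by (simp add: lamh_def iseq_def)
  next
    case False
    then have i: "iseq n j a \<noteq> 0" "iseq n j a \<le> n" using a by (auto simp: iseq_def)
    have "b \<in> crysB n l" using b BP[of "a-1" j] a by (simp add: Pset_def)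
    then have nn: "\<And>p. p < 2*n \<Longrightarrow> 0 \<le> b!p" by (simp add: crysB_def)
    have "0 \<le> eps n l (iseq n j a) b"
      using i nn[of "2*n - iseq n j a"] nn[of "iseq n j a"] n
      by (auto simp: eps_def xc_def xbar_def pos_def)
    then show ?thesis using i by (simp add: lamh_def)
  qed
  have P3a: "\<exists>b. bseq n l j a = Some b \<and> eps n l (inext n j a) b = 0 \<and> phi n l (inext n j a) b > 0"
    if a: "1 \<le> a" "a \<le> 2*n" for j a
  proof (cases "a = 2*n")
    case True
    have "eps n l 0 (?Z[2*n-1 := int l]) = 0" "phi n l 0 (?Z[2*n-1 := int l]) > 0" using n l
      by (simp_all add: eps_def phi_def sB_def Zsum1 xc_def xbar_def pos_def nth_list_update)
    then show ?thesis using True bs[of a j] a by (simp add: inext_def iseq_def)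
  next
    case False
    then have a': "a < 2*n" using a by simp
    have "inext n j a = iseq n j (Suc a)" using False by (simp add: inext_def)
    then show ?thesis using bs[of a j] a a' eps_step[OF n a(1) a', of l j] phi_step[OF n a(1) a', of l j] l by simp
  qed
  have P3b: "bseq n l (j + 1) 0 = Option.bind (bseq n l j (2 * n))
              (fpow n l (iseq n (j + 1) 1) (lamh l (j + 1) (iseq n (j + 1) 1)))" for j
    using bs[of "2*n" j] n fpow_last[OF n, of l] by (simp add: bbar_eq iseq_def lamh_def)
  have mk1: "?Z[a-1 := int l] = mkb n (\<lambda>i. if i = a then int l else 0) (\<lambda>_. 0)" if "1 \<le> a" "a \<le> n" for a
    using that by (intro nth_equalityI) (auto simp: length_mkb nth_mkb nth_list_update)
  have mk2: "?Z[n+a-1 := int l] = mkb n (\<lambda>_. 0) (\<lambda>i. if i = n - a + 1 then int l else 0)" if "1 \<le> a" "a \<le> n" for a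
    using that by (intro nth_equalityI) (auto simp: length_mkb nth_mkb nth_list_update)
  show ?thesis
  proof (intro conjI allI impI)
    show "\<And>j. 1 \<le> j \<Longrightarrow> Bset n l j (2 * n) = crysB n l" using B2n by blast
  qed (use B2n P2 P3a P3b mk1 mk2 bs BP Pset_low Pset_high in \<open>auto simp: bbar_def\<close>)
qed

end
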